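(* Let $G=A_n$ or $S_n$ with $n\ge 5$, acting naturally on the set of $k$-element subsets of $\{1,\dots,n\}$, where $1\le k<n/2$. Then $G$ is $\tfrac{3}{2}$-transitive if and only if either $k=1$, or $n=7$ and $k=2$.
   Context: A finite transitive permutation group $G$ on $\Omega$ is $\tfrac{3}{2}$-transitive if for $\alpha\in\Omega$ all orbits of $G_\alpha$ on $\Omega\setminus\{\alpha\}$ have the same size, greater than $1$. *)

theory Defs
  imports "HOL-Combinatorics.Permutations"
begin

definition stabiliser :: "'g set \<Rightarrow> ('g \<Rightarrow> 'x \<Rightarrow> 'x) \<Rightarrow> 'x \<Rightarrow> 'g set" where
  "stabiliser G act a = {g \<in> G. act g a = a}"

definition orbit_of :: "'g set \<Rightarrow> ('g \<Rightarrow> 'x \<Rightarrow> 'x) \<Rightarrow> 'x \<Rightarrow> 'x set" where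
  "orbit_of H act b = {act h b | h. h \<in> H}"

definition transitive_on :: "'g set \<Rightarrow> ('g \<Rightarrow> 'x \<Rightarrow> 'x) \<Rightarrow> 'x set \<Rightarrow> bool" where
  "transitive_on G act \<Omega> \<longleftrightarrow> \<Omega> \<noteq> {} \<and> (\<forall>a\<in>\<Omega>. \<forall>b\<in>\<Omega>. \<exists>g\<in>G. act g a = b)"

definition three_halves_transitive :: "'g set \<Rightarrow> ('g \<Rightarrow> 'x \<Rightarrow> 'x) \<Rightarrow> 'x set \<Rightarrow> bool" where
  "three_halves_transitive G act \<Omega> \<longleftrightarrow> transitive_on G act \<Omega> \<and>
     (\<forall>a\<in>\<Omega>. \<forall>b\<in>\<Omega> - {a}. \<forall>c\<in>\<Omega> - {a}.
        card (orbit_of (stabiliser G act a) act b) = card (orbit_of (stabiliser G act a) act c)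
        \<and> card (orbit_of (stabiliser G act a) act b) > 1)"

definition sym_grp :: "nat \<Rightarrow> (nat \<Rightarrow> nat) set" where
  "sym_grp n = {p. p permutes {1..n}}"

definition alt_grp :: "nat \<Rightarrow> (nat \<Rightarrow> nat) set" where
  "alt_grp n = {p. p permutes {1..n} \<and> evenperm p}"

definition k_subsets :: "nat \<Rightarrow> nat \<Rightarrow> nat set set" where
  "k_subsets n k = {B. B \<subseteq> {1..n} \<and> card B = k}"

definition set_action :: "(nat \<Rightarrow> nat) \<Rightarrow> nat set \<Rightarrow> nat set" where
  "set_action g B = g ` B"

end

theory Submission
  imports Defs
begin

lemma glue_bij:
  assumes "bij_betw f A A'" "bij_betw g B B'" "A \<inter> B = {}" "A' \<inter> B' = {}"
  shows "bij_betw (\<lambda>x. if x \<in> A then f x else g x) (A \<union> B) (A' \<union> B')"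
proof (rule bij_betw_combine)
  show "bij_betw (\<lambda>x. if x \<in> A then f x else g x) A A'"
    using assms(1) by (rule bij_betw_cong[THEN iffD1, rotated]) auto
  show "bij_betw (\<lambda>x. if x \<in> A then f x else g x) B B'"
    using assms(2,3) by (intro bij_betw_cong[THEN iffD1, OF _ assms(2)]) auto
qed (use assms in auto)

lemma two_same_class:
  assumes "finite S" "card S \<ge> 5"
  shows "\<exists>a b. a \<noteq> b \<and> a \<in> S \<and> b \<in> S \<and> (a \<in> B \<longleftrightarrow> b \<in> B) \<and> (a \<in> D \<longleftrightarrow> b \<in> D)"
proof (rule ccontr)
  assume "\<not> ?thesis"
  hence "inj_on (\<lambda>x. (x \<in> B, x \<in> D)) S" unfolding inj_on_def by blast
  hence "card S \<le> card (UNIV :: (bool \<times> bool) set)"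
    by (rule card_inj_on_le) auto
  also have "card (UNIV :: (bool \<times> bool) set) = 4"
    by (simp add: UNIV_Times_UNIV[symmetric] card_cartesian_product card_UNIV_bool del: UNIV_Times_UNIV)
  finally show False using assms by simp
qed

lemma exists_perm:
  fixes n :: nat
  assumes n5: "n \<ge> 5" and sub: "B \<subseteq> {1..n}" "C \<subseteq> {1..n}" "D \<subseteq> {1..n}"
    and cd: "card C = card D" and ci: "card (C \<inter> B) = card (D \<inter> B)"
  shows "\<exists>p. p permutes {1..n} \<and> evenperm p \<and> p ` B = B \<and> p ` C = D"
proof -
  define S where "S = {1..n::nat}"
  have fS: "finite S" unfolding S_def by simp
  have cS: "card S = n" unfolding S_def by simp
  have fin: "finite B" "finite C" "finite D" using sub by (auto intro: finite_subset)
  define A1 where "A1 = C \<inter> B"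
  define A2 where "A2 = B - C"
  define A3 where "A3 = C - B"
  define A4 where "A4 = S - (B \<union> C)"
  define E1 where "E1 = D \<inter> B"
  define E2 where "E2 = B - D"
  define E3 where "E3 = D - B"
  define E4 where "E4 = S - (B \<union> D)"
  have c1: "card A1 = card E1" using ci unfolding A1_def E1_def .
  have c2: "card A2 = card E2"
  proof -
    have "card A2 = card B - card (C \<inter> B)" unfolding A2_def
      using fin by (metis Diff_Int2 Int_commute Int_lower2 card_Diff_subset finite_Int inf.idem Diff_Int)
    moreover have "card E2 = card B - card (D \<inter> B)" unfolding E2_def
      using fin by (metis Diff_Int2 Int_commute Int_lower2 card_Diff_subset finite_Int inf.idem Diff_Int)
    ultimately show ?thesis using ci by simp
  qed
  have c3: "card A3 = card E3"
  proof -
    have "card A3 = card C - card (C \<inter> B)" unfolding A3_def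
      using fin by (metis Diff_Int2 Int_lower2 card_Diff_subset finite_Int inf.idem Int_commute)
    moreover have "card E3 = card D - card (D \<inter> B)" unfolding E3_def
      using fin by (metis Diff_Int2 Int_lower2 card_Diff_subset finite_Int inf.idem Int_commute)
    ultimately show ?thesis using ci cd by simp
  qed
  have c4: "card A4 = card E4"
  proof -
    have u1: "card (B \<union> C) = card B + card C - card (C \<inter> B)"
      using card_Un_Int[OF fin(1,2)] by (simp add: Int_commute)
    have u2: "card (B \<union> D) = card B + card D - card (D \<inter> B)"
      using card_Un_Int[OF fin(1,3)] by (simp add: Int_commute)
    have "card A4 = card S - card (B \<union> C)" unfolding A4_def
      using sub fin S_def by (intro card_Diff_subset) auto
    moreover have "card E4 = card S - card (B \<union> D)" unfolding E4_def
      using sub fin S_def by (intro card_Diff_subset) auto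
    ultimately show ?thesis using u1 u2 ci cd by simp
  qed
  have fA: "finite A1" "finite A2" "finite A3" "finite A4"
    unfolding A1_def A2_def A3_def A4_def using fin fS by auto
  have fE: "finite E1" "finite E2" "finite E3" "finite E4"
    unfolding E1_def E2_def E3_def E4_def using fin fS by auto
  obtain f1 where f1: "bij_betw f1 A1 E1" using finite_same_card_bij[OF fA(1) fE(1) c1] by blast
  obtain f2 where f2: "bij_betw f2 A2 E2" using finite_same_card_bij[OF fA(2) fE(2) c2] by blast
  obtain f3 where f3: "bij_betw f3 A3 E3" using finite_same_card_bij[OF fA(3) fE(3) c3] by blast
  obtain f4 where f4: "bij_betw f4 A4 E4" using finite_same_card_bij[OF fA(4) fE(4) c4] by blast
  define p where "p = (\<lambda>x. if x \<in> A1 then f1 x else if x \<in> A2 then f2 x else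
      if x \<in> A3 then f3 x else if x \<in> A4 then f4 x else x)"
  have b34: "bij_betw (\<lambda>x. if x \<in> A3 then f3 x else if x \<in> A4 then f4 x else x) (A3 \<union> A4) (E3 \<union> E4)"
  proof (rule glue_bij[OF f3])
    show "bij_betw (\<lambda>x. if x \<in> A4 then f4 x else x) A4 E4"
      using f4 by (rule bij_betw_cong[THEN iffD1, rotated]) auto
  qed (auto simp: A3_def A4_def E3_def E4_def)
  have b234: "bij_betw (\<lambda>x. if x \<in> A2 then f2 x else if x \<in> A3 then f3 x else if x \<in> A4 then f4 x else x)
      (A2 \<union> (A3 \<union> A4)) (E2 \<union> (E3 \<union> E4))"
    by (rule glue_bij[OF f2 b34]) (auto simp: A2_def A3_def A4_def E2_def E3_def E4_def)
  have b: "bij_betw p (A1 \<union> (A2 \<union> (A3 \<union> A4))) (E1 \<union> (E2 \<union> (E3 \<union> E4)))"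
    unfolding p_def
    by (rule glue_bij[OF f1 b234]) (auto simp: A1_def A2_def A3_def A4_def E1_def E2_def E3_def E4_def)
  have uA: "A1 \<union> (A2 \<union> (A3 \<union> A4)) = S"
    using sub unfolding A1_def A2_def A3_def A4_def S_def by auto
  have uE: "E1 \<union> (E2 \<union> (E3 \<union> E4)) = S"
    using sub unfolding E1_def E2_def E3_def E4_def S_def by auto
  have pperm: "p permutes S"
  proof (rule bij_imp_permutes)
    show "bij_betw p S S" using b uA uE by simp
    show "p x = x" if "x \<notin> S" for x
      using that sub unfolding p_def A1_def A2_def A3_def A4_def S_def by auto
  qed
  have pA: "p ` A1 = E1" "p ` A2 = E2" "p ` A3 = E3"
  proof -
    show "p ` A1 = E1" using f1 unfolding bij_betw_def p_def by (auto simp: image_def)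
    show "p ` A2 = E2" using f2 unfolding bij_betw_def p_def
      by (auto simp: image_def A1_def A2_def)
    show "p ` A3 = E3" using f3 unfolding bij_betw_def p_def
      by (auto simp: image_def A1_def A2_def A3_def)
  qed
  have pB: "p ` B = B"
  proof -
    have "B = A1 \<union> A2" unfolding A1_def A2_def by auto
    hence "p ` B = E1 \<union> E2" using pA by (simp add: image_Un)
    thus ?thesis unfolding E1_def E2_def by auto
  qed
  have pC: "p ` C = D"
  proof -
    have "C = A1 \<union> A3" unfolding A1_def A3_def by auto
    hence "p ` C = E1 \<union> E3" using pA by (simp add: image_Un)
    thus ?thesis unfolding E1_def E3_def by auto
  qed
  show ?thesis
  proof (cases "evenperm p")
    case True
    thus ?thesis using pperm pB pC S_def by blast
  next
    case False
    obtain a b where ab: "a \<noteq> b" "a \<in> S" "b \<in> S" "(a \<in> B \<longleftrightarrow> b \<in> B)" "(a \<in> D \<longleftrightarrow> b \<in> D)"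
      using two_same_class[OF fS] cS n5 by metis
    define q where "q = transpose a b \<circ> p"
    have qperm: "q permutes S" unfolding q_def
      by (rule permutes_compose[OF pperm permutes_swap_id[OF ab(2,3)]])
    have "permutation p" using pperm fS permutation_permutes by blast
    moreover have "permutation (transpose a b)"
      using permutes_swap_id[OF ab(2,3)] fS permutation_permutes by blast
    ultimately have "evenperm q" unfolding q_def using False ab(1)
      by (simp add: evenperm_comp evenperm_swap)
    moreover have "q ` B = B" "q ` C = D" unfolding q_def using pB pC ab
      by (simp_all only: image_comp[symmetric] transpose_image_eq)
    ultimately show ?thesis using qperm S_def by blast
  qed
qed

lemma G_facts:
  assumes "G = alt_grp n \<or> G = sym_grp n"
  shows "p \<in> G \<Longrightarrow> p permutes {1..n}" "p permutes {1..n} \<Longrightarrow> evenperm p \<Longrightarrow> p \<in> G"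
  using assms unfolding alt_grp_def sym_grp_def by auto

lemma orbit_eq:
  fixes n :: nat
  assumes n5: "n \<ge> 5" and G: "G = alt_grp n \<or> G = sym_grp n"
    and B: "B \<subseteq> {1..n}" and C: "C \<in> k_subsets n k"
  shows "orbit_of (stabiliser G set_action B) set_action C
     = {D. D \<subseteq> {1..n} \<and> card D = k \<and> card (D \<inter> B) = card (C \<inter> B)}"
proof (intro equalityI subsetI)
  fix X assume "X \<in> orbit_of (stabiliser G set_action B) set_action C"
  then obtain p where p: "p \<in> G" "p ` B = B" "X = p ` C"
    unfolding orbit_of_def stabiliser_def set_action_def by auto
  have pp: "p permutes {1..n}" using G_facts(1)[OF G p(1)] .
  have inj: "inj p" using permutes_inj[OF pp] .
  have "X \<subseteq> {1..n}" using C p(3) permutes_image[OF pp] unfolding k_subsets_def by auto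
  moreover have "card X = k" using C p(3) inj unfolding k_subsets_def
    by (simp add: card_image inj_on_subset)
  moreover have "card (X \<inter> B) = card (C \<inter> B)"
  proof -
    have "X \<inter> B = p ` (C \<inter> B)" using p(2,3) inj by (simp add: image_Int)
    thus ?thesis using inj by (simp add: card_image inj_on_subset)
  qed
  ultimately show "X \<in> {D. D \<subseteq> {1..n} \<and> card D = k \<and> card (D \<inter> B) = card (C \<inter> B)}" by simp
next
  fix D assume "D \<in> {D. D \<subseteq> {1..n} \<and> card D = k \<and> card (D \<inter> B) = card (C \<inter> B)}"
  hence D: "D \<subseteq> {1..n}" "card D = k" "card (D \<inter> B) = card (C \<inter> B)" by auto
  have C': "C \<subseteq> {1..n}" "card C = k" using C unfolding k_subsets_def by auto
  obtain p where p: "p permutes {1..n}" "evenperm p" "p ` B = B" "p ` C = D"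
    using exists_perm[OF n5 B C'(1) D(1)] C'(2) D(2,3) by metis
  have "p \<in> G" using G_facts(2)[OF G p(1,2)] .
  thus "D \<in> orbit_of (stabiliser G set_action B) set_action C"
    using p unfolding orbit_of_def stabiliser_def set_action_def by auto
qed

lemma card_X:
  fixes n :: nat
  assumes B: "B \<subseteq> {1..n}" and ik: "i \<le> k"
  shows "card {D. D \<subseteq> {1..n} \<and> card D = k \<and> card (D \<inter> B) = i}
     = (card B choose i) * ((n - card B) choose (k - i))"
proof -
  define P where "P = {X. X \<subseteq> B \<and> card X = i}"
  define Q where "Q = {Y. Y \<subseteq> {1..n} - B \<and> card Y = k - i}"
  have fB: "finite B" using B by (rule finite_subset) simp
  have eq: "{D. D \<subseteq> {1..n} \<and> card D = k \<and> card (D \<inter> B) = i} = (\<lambda>(X,Y). X \<union> Y) ` (P \<times> Q)"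
  proof (intro equalityI subsetI)
    fix D assume "D \<in> {D. D \<subseteq> {1..n} \<and> card D = k \<and> card (D \<inter> B) = i}"
    hence D: "D \<subseteq> {1..n}" "card D = k" "card (D \<inter> B) = i" by auto
    have fD: "finite D" using D(1) by (rule finite_subset) simp
    have "card D = card (D \<inter> B) + card (D - B)"
      using fD by (metis Diff_Diff_Int Diff_disjoint Int_Diff_Un card_Un_disjoint finite_Diff finite_Int inf_commute)
    hence "card (D - B) = k - i" using D by simp
    hence "(D \<inter> B, D - B) \<in> P \<times> Q" using D unfolding P_def Q_def by auto
    moreover have "D = (\<lambda>(X,Y). X \<union> Y) (D \<inter> B, D - B)" by auto
    ultimately show "D \<in> (\<lambda>(X,Y). X \<union> Y) ` (P \<times> Q)" by blast
  next
    fix D assume "D \<in> (\<lambda>(X,Y). X \<union> Y) ` (P \<times> Q)"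
    then obtain X Y where XY: "X \<subseteq> B" "card X = i" "Y \<subseteq> {1..n} - B" "card Y = k - i" "D = X \<union> Y"
      unfolding P_def Q_def by auto
    have fX: "finite X" using XY(1) fB by (rule finite_subset)
    have fY: "finite Y" using XY(3) by (rule finite_subset) simp
    have dis: "X \<inter> Y = {}" using XY by auto
    have "card D = k" using card_Un_disjoint[OF fX fY dis] XY ik by simp
    moreover have "D \<inter> B = X" using XY by auto
    ultimately show "D \<in> {D. D \<subseteq> {1..n} \<and> card D = k \<and> card (D \<inter> B) = i}"
      using XY B by auto
  qed
  have inj: "inj_on (\<lambda>(X,Y). X \<union> Y) (P \<times> Q)"
  proof (rule inj_onI)
    fix u v assume uv: "u \<in> P \<times> Q" "v \<in> P \<times> Q" "(\<lambda>(X,Y). X \<union> Y) u = (\<lambda>(X,Y). X \<union> Y) v"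
    obtain X Y where u: "u = (X,Y)" by (cases u)
    obtain X' Y' where v: "v = (X',Y')" by (cases v)
    have e: "X \<union> Y = X' \<union> Y'" using uv(3) u v by simp
    have "X = (X \<union> Y) \<inter> B" "X' = (X' \<union> Y') \<inter> B" "Y = (X \<union> Y) - B" "Y' = (X' \<union> Y') - B"
      using uv(1,2) u v unfolding P_def Q_def by auto
    thus "u = v" using e u v by metis
  qed
  have "card P = card B choose i" unfolding P_def using n_subsets[OF fB] .
  moreover have "card Q = (n - card B) choose (k - i)"
  proof -
    have "card ({1..n} - B) = n - card B" using B by (simp add: card_Diff_subset fB)
    thus ?thesis unfolding Q_def using n_subsets[of "{1..n} - B" "k - i"] by simp
  qed
  ultimately show ?thesis unfolding eq using card_image[OF inj] by (simp add: card_cartesian_product)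
qed

lemma arith_part:
  fixes n k :: nat
  assumes "k \<ge> 2" "2 * k < n"
    and "(k choose (k - 1)) * ((n - k) choose (k - (k - 1))) = (k choose (k - 2)) * ((n - k) choose (k - (k - 2)))"
  shows "n = 7 \<and> k = 2"
proof -
  define m where "m = n - k"
  have m: "m \<ge> k + 1" using assms unfolding m_def by simp
  have a: "k choose (k-1) = k" using binomial_symmetric[of "k-1" k] assms(1) by simp
  have b: "k choose (k-2) = k choose 2" using binomial_symmetric[of "k-2" k] assms(1) by simp
  have two: "2 * (x choose 2) = x * (x - 1)" for x :: nat
  proof -
    have "even (x * (x - 1))" by (cases "even x") auto
    thus ?thesis by (simp add: choose_two)
  qed
  have e: "k * m = (k choose 2) * (m choose 2)"
    using assms(3) a b assms(1) unfolding m_def[symmetric] by (simp add: numeral_2_eq_2)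
  hence "4 * (k * m) = (2 * (k choose 2)) * (2 * (m choose 2))" by simp
  hence "4 * (k * m) = (k * (k - 1)) * (m * (m - 1))" by (simp only: two)
  hence e2: "(k * m) * 4 = (k * m) * ((k - 1) * (m - 1))" by (simp add: ac_simps)
  have "k * m > 0" using assms(1) m by simp
  hence e3: "(k - 1) * (m - 1) = 4" using e2 by simp
  show ?thesis
  proof (cases "k = 2")
    case True
    thus ?thesis using e3 m_def assms by simp
  next
    case False
    hence "k - 1 \<ge> 2" "m - 1 \<ge> 3" using assms(1) m by auto
    hence "(k - 1) * (m - 1) \<ge> 2 * 3" by (rule mult_le_mono)
    thus ?thesis using e3 by simp
  qed
qed

theorem lemma4p3:
  fixes n k :: nat and G :: "(nat \<Rightarrow> nat) set"
  assumes "n \<ge> 5" and "1 \<le> k" and "2 * k < n"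
    and "G = alt_grp n \<or> G = sym_grp n"
  shows "three_halves_transitive G set_action (k_subsets n k) \<longleftrightarrow> (k = 1 \<or> (n = 7 \<and> k = 2))"
proof -
  note G = assms(4)
  define \<Omega> where "\<Omega> = k_subsets n k"
  have Om: "b \<in> \<Omega> \<longleftrightarrow> b \<subseteq> {1..n} \<and> card b = k" for b
    unfolding \<Omega>_def k_subsets_def by simp
  have trans: "transitive_on G set_action \<Omega>"
    unfolding transitive_on_def
  proof (intro conjI ballI)
    have "{1..k} \<in> \<Omega>" using Om assms by auto
    thus "\<Omega> \<noteq> {}" by blast
  next
    fix a b assume ab: "a \<in> \<Omega>" "b \<in> \<Omega>"
    obtain p where p: "p permutes {1..n}" "evenperm p" "p ` a = b"
      using exists_perm[of n "{}" a b] assms(1) ab Om by auto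
    thus "\<exists>g\<in>G. set_action g a = b" using G_facts(2)[OF G p(1,2)]
      unfolding set_action_def by blast
  qed
  have orbcard: "card (orbit_of (stabiliser G set_action a) set_action b)
      = (k choose card (b \<inter> a)) * ((n - k) choose (k - card (b \<inter> a)))"
    if "a \<in> \<Omega>" "b \<in> \<Omega>" for a b
  proof -
    have a: "a \<subseteq> {1..n}" "card a = k" using that Om by auto
    have fa: "finite a" using a(1) by (rule finite_subset) simp
    have le: "card (b \<inter> a) \<le> k" using a(2) fa by (metis card_mono inf_le2)
    show ?thesis
      using orbit_eq[OF assms(1) G a(1), of b k] that(2) card_X[OF a(1) le] a(2)
      unfolding \<Omega>_def by simp
  qed
  have lt: "card (b \<inter> a) < k" if "a \<in> \<Omega>" "b \<in> \<Omega>" "b \<noteq> a" for a b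
  proof (rule ccontr)
    assume "\<not> card (b \<inter> a) < k"
    moreover have fa: "finite a" "finite b" using that(1,2) Om by (auto intro: finite_subset)
    moreover have "card (b \<inter> a) \<le> card a" "card (b \<inter> a) \<le> card b"
      using fa by (auto intro: card_mono)
    ultimately have "card (b \<inter> a) = card a" "card (b \<inter> a) = card b" using that Om by auto
    hence "b \<inter> a = a" "b \<inter> a = b" using fa
      by (metis card_subset_eq inf_le2, metis card_subset_eq inf_le1)
    thus False using that(3) by simp
  qed
  show ?thesis
  proof
    assume th: "three_halves_transitive G set_action (k_subsets n k)"
    show "k = 1 \<or> (n = 7 \<and> k = 2)"
    proof (rule ccontr)
      assume nk: "\<not> (k = 1 \<or> (n = 7 \<and> k = 2))"
      hence k2: "k \<ge> 2" using assms(2) by simp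
      define B where "B = {1..k}"
      define C1 where "C1 = {1..<k} \<union> {k+1}"
      define C2 where "C2 = {1..k-2} \<union> {k+1, k+2}"
      have B: "B \<in> \<Omega>" unfolding B_def Om using assms by auto
      have C1: "C1 \<in> \<Omega>" unfolding C1_def Om using assms k2 by auto
      have C2: "C2 \<in> \<Omega>" unfolding C2_def Om using assms k2 by auto
      have "k+1 \<in> C1" "k+1 \<in> C2" "k+1 \<notin> B" unfolding C1_def C2_def B_def by auto
      hence C1B: "C1 \<noteq> B" and C2B: "C2 \<noteq> B" by auto
      have i1: "card (C1 \<inter> B) = k - 1"
      proof -
        have "C1 \<inter> B = {1..<k}" unfolding C1_def B_def by auto
        thus ?thesis by simp
      qed
      have i2: "card (C2 \<inter> B) = k - 2"
      proof -
        have "C2 \<inter> B = {1..k-2}" unfolding C2_def B_def using k2 by auto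
        thus ?thesis by simp
      qed
      have "card (orbit_of (stabiliser G set_action B) set_action C1)
          = card (orbit_of (stabiliser G set_action B) set_action C2)"
        using th B C1 C2 C1B C2B unfolding three_halves_transitive_def \<Omega>_def by blast
      hence "(k choose (k - 1)) * ((n - k) choose (k - (k - 1)))
           = (k choose (k - 2)) * ((n - k) choose (k - (k - 2)))"
        using orbcard[OF B C1] orbcard[OF B C2] i1 i2 by simp
      from arith_part[OF k2 assms(3) this] nk show False by simp
    qed
  next
    assume r: "k = 1 \<or> (n = 7 \<and> k = 2)"
    have val: "card (orbit_of (stabiliser G set_action a) set_action b) = (if k = 1 then n - 1 else 10)"
      if "a \<in> \<Omega>" "b \<in> \<Omega>" "b \<noteq> a" for a b
    proof -
      have l: "card (b \<inter> a) < k" using lt[OF that] .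
      show ?thesis
      proof (cases "k = 1")
        case True
        thus ?thesis using orbcard[OF that(1,2)] l by simp
      next
        case False
        hence nk: "n = 7" "k = 2" using r by auto
        have "card (b \<inter> a) = 0 \<or> card (b \<inter> a) = 1" using l nk by auto
        thus ?thesis using orbcard[OF that(1,2)] nk by (auto simp: choose_two)
      qed
    qed
    show "three_halves_transitive G set_action (k_subsets n k)"
      unfolding three_halves_transitive_def \<Omega>_def[symmetric]
    proof (intro conjI trans ballI)
      fix a b c assume "a \<in> \<Omega>" "b \<in> \<Omega> - {a}" "c \<in> \<Omega> - {a}"
      thus "card (orbit_of (stabiliser G set_action a) set_action b) =
            card (orbit_of (stabiliser G set_action a) set_action c)"
        "1 < card (orbit_of (stabiliser G set_action a) set_action b)"
        using val[of a b] val[of a c] assms(1) by auto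
    qed
  qed
qed

end
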